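(* Let $q$ be a prime power, let $k\ge1$, $n=2k$, and let $t\ge0$ be an even integer. Let $\delta\in\mathbb{F}_{q^n}$ satisfy $\delta^{q^k}=-\delta$, and let $L(x)=\sum_i a_i x^{q^i}$ be a $q$-polynomial with all coefficients $a_i\in\mathbb{F}_{q^k}$. Then $f(x)=(x^{q^k}-x+\delta)^t+L(x)$ is a permutation polynomial of $\mathbb{F}_{q^n}$ if and only if $L(x)$ is a permutation polynomial of $\mathbb{F}_{q^n}$.
   Context: A polynomial is a permutation polynomial of $\mathbb{F}_{q^n}$ if it induces a bijection of $\mathbb{F}_{q^n}$. *)

theory Defs
  imports "HOL-Number_Theory.Number_Theory"
begin

definition q_poly :: "nat \<Rightarrow> nat \<Rightarrow> (nat \<Rightarrow> 'a::comm_ring_1) \<Rightarrow> 'a \<Rightarrow> 'a" where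
  "q_poly q m a x = (\<Sum>i<m. a i * x ^ (q ^ i))"

definition is_perm :: "('a \<Rightarrow> 'a) \<Rightarrow> bool" where
  "is_perm f \<longleftrightarrow> bij f"

end

theory Submission
  imports Defs "HOL-Computational_Algebra.Primes"
begin

lemma ff_power_card:
  fixes x :: "'a :: {finite,field}"
  shows "x ^ card (UNIV :: 'a set) = x"
proof (cases "x = 0")
  case False
  have "x * (\<Prod>y\<in>UNIV-{0}. x * y) = x * x ^ (card (UNIV :: 'a set) - 1) * \<Prod>(UNIV-{0})"
    by (simp add: prod.distrib mult_ac)
  also have "x * x ^ (card (UNIV :: 'a set) - 1) = x ^ Suc (card (UNIV :: 'a set) - 1)"
    by (subst power_Suc) auto
  also have "Suc (card (UNIV :: 'a set) - 1) = card (UNIV :: 'a set)"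
    using finite_UNIV_card_ge_0[where ?'a = 'a] by simp
  also have "(\<Prod>y\<in>UNIV-{0}. x * y) = (\<Prod>y\<in>UNIV-{0}. y)"
    by (rule prod.reindex_bij_witness[of _ "\<lambda>y. y / x" "\<lambda>y. x * y"]) (use False in auto)
  finally show ?thesis
    by simp
qed (use finite_UNIV_card_ge_0[where ?'a = 'a] in auto)

lemma frob_add:
  fixes x y :: "'a::comm_ring_1"
  assumes "prime CHAR('a)" "q = CHAR('a) ^ e"
  shows "(x + y) ^ (q ^ n) = x ^ (q ^ n) + y ^ (q ^ n)"
  using freshmans_dream'[OF assms(1), of "q^n" "e*n"] assms(2) by (simp add: power_mult)

lemma frob_diff:
  fixes x y :: "'a::comm_ring_1"
  assumes "prime CHAR('a)" "q = CHAR('a) ^ e"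
  shows "(x - y) ^ (q ^ n) = x ^ (q ^ n) - y ^ (q ^ n)"
proof -
  have "x ^ (q ^ n) = ((x - y) + y) ^ (q ^ n)" by simp
  also have "\<dots> = (x - y) ^ (q ^ n) + y ^ (q ^ n)" by (rule frob_add[OF assms])
  finally show ?thesis by simp
qed

lemma frob_sum:
  fixes f :: "'b \<Rightarrow> 'a::comm_ring_1"
  assumes "prime CHAR('a)" "q = CHAR('a) ^ e"
  shows "(sum f A) ^ (q ^ n) = (\<Sum>i\<in>A. f i ^ (q ^ n))"
  using freshmans_dream_sum'[OF assms(1), of "q^n" "e*n"] assms(2) by (simp add: power_mult)

theorem mainTheorem3:
  fixes q k t m :: nat and \<delta> :: "'a::{finite,field}" and a :: "nat \<Rightarrow> 'a"
  assumes "primepow q"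
    and "k \<ge> 1"
    and "card (UNIV :: 'a set) = q ^ (2 * k)"
    and "even t"
    and "\<delta> ^ (q ^ k) = - \<delta>"
    and "\<forall>i<m. a i ^ (q ^ k) = a i"
  shows "is_perm (\<lambda>x. (x ^ (q ^ k) - x + \<delta>) ^ t + q_poly q m a x)
     \<longleftrightarrow> is_perm (q_poly q m a)"
proof -
  obtain p e where pe: "prime p" "e > 0" "q = p ^ e"
    using assms(1) unfolding primepow_def by blast
  have fin: "finite (UNIV :: 'a set)" by simp
  have cp: "prime CHAR('a)"
    using prime_CHAR_semidom finite_imp_CHAR_pos[OF fin] by blast
  have "CHAR('a) dvd p ^ (e * (2 * k))"
    using CHAR_dvd_CARD[where 'a='a] assms(3) pe(3) by (simp add: power_mult)
  then have "CHAR('a) dvd p" using cp prime_dvd_power by blast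
  then have cpe: "CHAR('a) = p" using cp pe(1)
    by (metis primes_dvd_imp_eq)
  have hq: "q = CHAR('a) ^ e" using pe cpe by simp
  have q0: "q > 0" using pe prime_gt_0_nat by simp
  define s :: "'a \<Rightarrow> 'a" where "s x = x ^ (q ^ k)" for x
  define L where "L = q_poly q m a"
  define g where "g x = s x - x" for x
  define h where "h x = (g x + \<delta>) ^ t" for x
  have sadd: "s (x + y) = s x + s y" for x y unfolding s_def by (rule frob_add[OF cp hq])
  have sdiff: "s (x - y) = s x - s y" for x y unfolding s_def by (rule frob_diff[OF cp hq])
  have ss: "s (s x) = x" for x
  proof -
    have "s (s x) = x ^ (q ^ k * q ^ k)" unfolding s_def by (simp add: power_mult)
    also have "q ^ k * q ^ k = card (UNIV :: 'a set)" using assms(3)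
      by (simp add: power_add[symmetric] mult_2)
    finally show ?thesis using ff_power_card by simp
  qed
  have Ladd: "L (x + y) = L x + L y" for x y
    unfolding L_def q_poly_def
    by (simp add: frob_add[OF cp hq] distrib_left sum.distrib)
  have Ldiff: "L (x - y) = L x - L y" for x y
    unfolding L_def q_poly_def
    by (simp add: frob_diff[OF cp hq] right_diff_distrib sum_subtractf)
  have Ls: "s (L x) = L (s x)" for x
  proof -
    have "s (L x) = (\<Sum>i<m. (a i * x ^ q ^ i) ^ (q ^ k))"
      unfolding s_def L_def q_poly_def by (rule frob_sum[OF cp hq])
    also have "\<dots> = (\<Sum>i<m. a i * (x ^ q ^ k) ^ q ^ i)"
    proof (rule sum.cong)
      fix i assume "i \<in> {..<m}"
      then have "a i ^ (q ^ k) = a i" using assms(6) by simp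
      moreover have "(x ^ q ^ i) ^ q ^ k = (x ^ q ^ k) ^ q ^ i"
        by (simp add: power_mult[symmetric] mult.commute)
      ultimately show "(a i * x ^ q ^ i) ^ q ^ k = a i * (x ^ q ^ k) ^ q ^ i"
        by (simp add: power_mult_distrib)
    qed simp
    finally show ?thesis unfolding L_def q_poly_def s_def .
  qed
  have gadd: "g (x + y) = g x + g y" for x y unfolding g_def using sadd by simp
  have gL: "g (L x) = L (g x)" for x unfolding g_def using Ls Ldiff by simp
  have sh: "s (h x) = h x" for x
  proof -
    have "s (g x + \<delta>) = - (g x + \<delta>)"
      using sadd sdiff ss assms(5) unfolding g_def s_def[symmetric] by simp
    then have "s (h x) = (- (g x + \<delta>)) ^ t"
      unfolding h_def s_def by (metis power_mult mult.commute)
    then show ?thesis unfolding h_def using assms(4) power_minus_even[of t "g x + \<delta>"] by simp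
  qed
  have gh: "g (h x) = 0" for x unfolding g_def using sh by simp
  define f where "f x = h x + L x" for x
  have gf: "g (f x) = L (g x)" for x unfolding f_def using gadd gh gL by simp
  have fdef: "(\<lambda>x. (x ^ (q ^ k) - x + \<delta>) ^ t + q_poly q m a x) = f"
    unfolding f_def h_def g_def s_def L_def by auto
  have Leq: "q_poly q m a = L" unfolding L_def ..
  have "bij f \<longleftrightarrow> bij L"
  proof
    assume "bij f"
    have "range g = g ` (f ` UNIV)" using \<open>bij f\<close> by (simp add: bij_def)
    also have "\<dots> = L ` range g" using gf by (auto simp: image_image)
    finally have "card (L ` range g) = card (range g)" by simp
    then have inj: "inj_on L (range g)" by (rule eq_card_imp_inj_on[OF finite])
    have "inj L"
    proof (rule injI)
      fix x y assume "L x = L y"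
      define z where "z = x - y"
      have Lz: "L z = 0" using \<open>L x = L y\<close> Ldiff unfolding z_def by simp
      have L0: "L 0 = 0" using Ldiff[of 0 0] by (metis diff_self)
      have g0: "g 0 = 0" using gadd[of 0 0] by (metis add_cancel_left_right add_0)
      have "L (g z) = L (g 0)" using gL[of z] Lz g0 L0 by simp
      then have gz: "g z = 0" using inj g0 by (metis inj_onD rangeI)
      have "h (y + z) = h y" unfolding h_def using gadd gz by simp
      then have "f (y + z) = f y" unfolding f_def using Ladd Lz by simp
      then have "y + z = y" using \<open>bij f\<close> by (simp add: bij_def inj_eq)
      then show "x = y" unfolding z_def by simp
    qed
    then show "bij L" using finite_UNIV_inj_surj[OF fin] by (simp add: bij_def)
  next
    assume "bij L"
    have "inj f"
    proof (rule injI)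
      fix x y assume fxy: "f x = f y"
      then have "L (g x) = L (g y)" using gf by metis
      then have "g x = g y" using \<open>bij L\<close> by (simp add: bij_def inj_eq)
      then have "h x = h y" unfolding h_def by simp
      then have "L x = L y" using fxy unfolding f_def by simp
      then show "x = y" using \<open>bij L\<close> by (simp add: bij_def inj_eq)
    qed
    then show "bij f" using finite_UNIV_inj_surj[OF fin] by (simp add: bij_def)
  qed
  then show ?thesis using fdef Leq unfolding is_perm_def by simp
qed

end
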